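(* Let $\Omega\subset\mathbb{R}^d$ be a bounded domain, $\kappa\in L^\infty(\Omega)$ with $\kappa\ge\kappa_0>0$, $a(u,v)=\int_\Omega\kappa\nabla u\cdot\nabla v\,dx$, $\|u\|_a^2=a(u,u)$. Let $V_{H,1},V_{H,2}\subset H^1_0(\Omega)$ be finite-dimensional, $L^2(\Omega)$-orthogonal subspaces, and $\tau>0$. Define $(u,v)_{m_\tau}=(u,v)+\frac{\tau^2}{2}a(u,v)$, $\|v\|_{m_\tau}^2=(v,v)_{m_\tau}$, and operators $b_\tau:V_{H,1}\to V_{H,1}$, $c_\tau:V_{H,1}+V_{H,2}\to V_{H,1}$, $d_\tau:V_{H,1}+V_{H,2}\to V_{H,1}$ by $$(b_\tau(v_1),v)_{m_\tau}=(v_1,v),\quad (c_\tau(u),v)_{m_\tau}=\frac{\tau^2}{2}a(u,v),\quad a(d_\tau(u),v)=a(u,v)\qquad\forall v\in V_{H,1}.$$ Define for $v_1,v\in V_{H,1}$: $(v_1,v)_{s_\tau}=(v_1,v)-(b_\tau(v_1),b_\tau(v))_{m_\tau}$, $\|v_1\|_{s_\tau}^2=(v_1,v_1)_{s_\tau}$, and for $v_2\in V_{H,2}$: $\|v_2\|_{n_\tau}^2=\frac{\tau^2}{2}\|v_2\|_a^2-\|c_\tau(v_2)\|_{m_\tau}^2-\|d_\tau(v_2)\|_{s_\tau}^2$. Then for all $u_1\in V_{H,1}$ and $u_2\in V_{H,2}$, $$\|u_1\|^2+\frac{\tau^2}{2}\|u_2\|_a^2-\|b_\tau(u_1)-c_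\tau(u_2)\|_{m_\tau}^2=\|u_1+d_\tau(u_2)\|_{s_\tau}^2+\|u_2\|_{n_\tau}^2.$$
   Context: $(\cdot,\cdot)$ and $\|\cdot\|$ denote the $L^2(\Omega)$ inner product and norm. *)

theory Defs
  imports "HOL-Analysis.Analysis"
begin

text \<open>Setting: functions on R^d are modelled as maps on an arbitrary Euclidean space 'a.
  All integrals are Lebesgue integrals over the domain.\<close>

fun iter_deriv :: "('a::euclidean_space \<Rightarrow> real) \<Rightarrow> 'a list \<Rightarrow> 'a \<Rightarrow> real" where
  "iter_deriv f [] = f"
| "iter_deriv f (e # es) = (\<lambda>x. frechet_derivative (iter_deriv f es) (at x) e)"

definition smooth :: "('a::euclidean_space \<Rightarrow> real) \<Rightarrow> bool" where
  "smooth f \<longleftrightarrow> (\<forall>es. set es \<subseteq> Basis \<longrightarrow> (\<forall>x. iter_deriv f es differentiable (at x)))"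

definition tsupport :: "('a::euclidean_space \<Rightarrow> real) \<Rightarrow> 'a set" where
  "tsupport f = closure {x. f x \<noteq> 0}"

text \<open>Test functions C_c^infinity(Omega) (extended by zero to the whole space).\<close>
definition test_fun :: "'a::euclidean_space set \<Rightarrow> ('a \<Rightarrow> real) \<Rightarrow> bool" where
  "test_fun \<Omega> \<phi> \<longleftrightarrow> smooth \<phi> \<and> compact (tsupport \<phi>) \<and> tsupport \<phi> \<subseteq> \<Omega>"

definition cgrad :: "('a::euclidean_space \<Rightarrow> real) \<Rightarrow> 'a \<Rightarrow> 'a" where
  "cgrad f x = (\<Sum>i\<in>Basis. frechet_derivative f (at x) i *\<^sub>R i)"

definition L2fun :: "'a::euclidean_space set \<Rightarrow> ('a \<Rightarrow> real) \<Rightarrow> bool" where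
  "L2fun \<Omega> u \<longleftrightarrow> set_borel_measurable lebesgue \<Omega> u \<and> set_integrable lebesgue \<Omega> (\<lambda>x. (u x)^2)"

definition L2ip :: "'a::euclidean_space set \<Rightarrow> ('a \<Rightarrow> real) \<Rightarrow> ('a \<Rightarrow> real) \<Rightarrow> real" where
  "L2ip \<Omega> u v = (\<integral>x\<in>\<Omega>. u x * v x \<partial>lebesgue)"

definition is_weak_grad :: "'a::euclidean_space set \<Rightarrow> ('a \<Rightarrow> real) \<Rightarrow> ('a \<Rightarrow> 'a) \<Rightarrow> bool" where
  "is_weak_grad \<Omega> u g \<longleftrightarrow>
     (\<forall>\<phi>. test_fun \<Omega> \<phi> \<longrightarrow> (\<forall>i\<in>Basis.
        (\<integral>x\<in>\<Omega>. u x * frechet_derivative \<phi> (at x) i \<partial>lebesgue)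
          = - (\<integral>x\<in>\<Omega>. (g x \<bullet> i) * \<phi> x \<partial>lebesgue)))"

definition H1_with_grad :: "'a::euclidean_space set \<Rightarrow> ('a \<Rightarrow> real) \<Rightarrow> ('a \<Rightarrow> 'a) \<Rightarrow> bool" where
  "H1_with_grad \<Omega> u g \<longleftrightarrow> L2fun \<Omega> u \<and> (\<forall>i\<in>Basis. L2fun \<Omega> (\<lambda>x. g x \<bullet> i)) \<and> is_weak_grad \<Omega> u g"

text \<open>The weak gradient (unique up to null sets; any choice gives the same integrals).\<close>
definition wgrad :: "'a::euclidean_space set \<Rightarrow> ('a \<Rightarrow> real) \<Rightarrow> 'a \<Rightarrow> 'a" where
  "wgrad \<Omega> u = (SOME g. H1_with_grad \<Omega> u g)"

definition H10 :: "'a::euclidean_space set \<Rightarrow> ('a \<Rightarrow> real) set" where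
  "H10 \<Omega> = {u. \<exists>g. H1_with_grad \<Omega> u g \<and>
      (\<exists>\<phi>. (\<forall>n. test_fun \<Omega> (\<phi> n)) \<and>
         ((\<lambda>n. (\<integral>x\<in>\<Omega>. (u x - \<phi> n x)^2 \<partial>lebesgue)
              + (\<integral>x\<in>\<Omega>. (norm (g x - cgrad (\<phi> n) x))^2 \<partial>lebesgue)) \<longlonglongrightarrow> 0))}"

definition abil :: "'a::euclidean_space set \<Rightarrow> ('a \<Rightarrow> real) \<Rightarrow> ('a \<Rightarrow> real) \<Rightarrow> ('a \<Rightarrow> real) \<Rightarrow> real" where
  "abil \<Omega> \<kappa> u v = (\<integral>x\<in>\<Omega>. \<kappa> x * (wgrad \<Omega> u x \<bullet> wgrad \<Omega> v x) \<partial>lebesgue)"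

definition fun_subspace :: "('a \<Rightarrow> real) set \<Rightarrow> bool" where
  "fun_subspace V \<longleftrightarrow> (\<lambda>x. 0) \<in> V \<and> (\<forall>u\<in>V. \<forall>v\<in>V. (\<lambda>x. u x + v x) \<in> V)
      \<and> (\<forall>c. \<forall>u\<in>V. (\<lambda>x. c * u x) \<in> V)"

definition fin_dim_fun :: "('a \<Rightarrow> real) set \<Rightarrow> bool" where
  "fin_dim_fun V \<longleftrightarrow> (\<exists>B. finite B \<and> B \<subseteq> V \<and> (\<forall>u\<in>V. \<exists>c. u = (\<lambda>x. \<Sum>b\<in>B. c b * b x)))"

definition sum_space :: "('a \<Rightarrow> real) set \<Rightarrow> ('a \<Rightarrow> real) set \<Rightarrow> ('a \<Rightarrow> real) set" where
  "sum_space V W = {(\<lambda>x. v x + w x) | v w. v \<in> V \<and> w \<in> W}"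

definition m_ip :: "'a::euclidean_space set \<Rightarrow> ('a \<Rightarrow> real) \<Rightarrow> real \<Rightarrow> ('a \<Rightarrow> real) \<Rightarrow> ('a \<Rightarrow> real) \<Rightarrow> real" where
  "m_ip \<Omega> \<kappa> \<tau> u v = L2ip \<Omega> u v + \<tau>^2 / 2 * abil \<Omega> \<kappa> u v"

definition s_ip :: "'a::euclidean_space set \<Rightarrow> ('a \<Rightarrow> real) \<Rightarrow> real \<Rightarrow> (('a \<Rightarrow> real) \<Rightarrow> ('a \<Rightarrow> real))
                    \<Rightarrow> ('a \<Rightarrow> real) \<Rightarrow> ('a \<Rightarrow> real) \<Rightarrow> real" where
  "s_ip \<Omega> \<kappa> \<tau> b v1 v = L2ip \<Omega> v1 v - m_ip \<Omega> \<kappa> \<tau> (b v1) (b v)"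

definition n_sq :: "'a::euclidean_space set \<Rightarrow> ('a \<Rightarrow> real) \<Rightarrow> real \<Rightarrow> (('a \<Rightarrow> real) \<Rightarrow> ('a \<Rightarrow> real))
     \<Rightarrow> (('a \<Rightarrow> real) \<Rightarrow> ('a \<Rightarrow> real)) \<Rightarrow> (('a \<Rightarrow> real) \<Rightarrow> ('a \<Rightarrow> real)) \<Rightarrow> ('a \<Rightarrow> real) \<Rightarrow> real" where
  "n_sq \<Omega> \<kappa> \<tau> b c d v2 = \<tau>^2 / 2 * abil \<Omega> \<kappa> v2 v2 - m_ip \<Omega> \<kappa> \<tau> (c v2) (c v2)
      - s_ip \<Omega> \<kappa> \<tau> b (d v2) (d v2)"

end

theory Submission
  imports Defs
begin

definition fn :: "nat \<Rightarrow> real \<Rightarrow> real" where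
  "fn n t = (if t > 0 then exp (- 1 / t) / t ^ n else 0)"

lemma fn_lim0: "((\<lambda>t::real. exp (- 1 / t) / t ^ n) \<longlongrightarrow> 0) (at_right 0)"
proof -
  have eq: "\<And>t::real. inverse t ^ n / exp (inverse t) = exp (- 1 / t) / t ^ n"
    by (simp add: exp_minus divide_inverse power_inverse mult.commute)
  have "((\<lambda>t::real. inverse t ^ n / exp (inverse t)) \<longlongrightarrow> 0) (at_right 0)"
    by (rule filterlim_compose[OF tendsto_power_div_exp_0 filterlim_inverse_at_top_right])
  then show ?thesis by (rule Lim_transform_eventually) (simp add: eq)
qed

lemma fn_pos: "t > 0 \<Longrightarrow> fn k t = exp (- inverse t) * inverse t ^ k"
  by (simp add: fn_def divide_inverse power_inverse)

lemma alg_eq: "exp (- y) * y ^ 2 * y ^ n + real n * y ^ (n - Suc 0) * - (y ^ 2) * exp (- y)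
   = exp (- y) * y ^ (n + 2) - real n * (exp (- y) * (y::real) ^ (n + 1))"
  by (cases n) (simp_all add: algebra_simps power_add power2_eq_square)

lemma fn_deriv_pos:
  assumes True: "t > 0"
  shows "(fn n has_real_derivative (fn (n+2) t - real n * fn (n+1) t)) (at t)"
proof -
  have di: "((\<lambda>s. inverse s) has_real_derivative - (inverse t ^ 2)) (at t)"
    using DERIV_inverse[of t UNIV] True by (simp add: numeral_2_eq_2)
  have d1: "((\<lambda>s. exp (- inverse s)) has_real_derivative exp (- inverse t) * (inverse t ^ 2)) (at t)"
    using DERIV_fun_exp[OF DERIV_minus[OF di]] by simp
  have d2: "((\<lambda>s. inverse s ^ n) has_real_derivative real n * inverse t ^ (n - Suc 0) * - (inverse t ^ 2)) (at t)"
    using DERIV_power[OF di, of n] by (simp add: mult_ac)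
  have "((\<lambda>s. exp (- inverse s) * inverse s ^ n) has_real_derivative (fn (n+2) t - real n * fn (n+1) t)) (at t)"
    using DERIV_mult[OF d1 d2] True by (simp only: fn_pos alg_eq)
  then show ?thesis
    by (rule has_field_derivative_transform_within_open[of _ _ _ "{0<..}"])
       (use True in \<open>auto simp: fn_pos\<close>)
qed

lemma fn_deriv_neg:
  assumes "t < 0"
  shows "(fn n has_real_derivative (fn (n+2) t - real n * fn (n+1) t)) (at t)"
proof -
  have "((\<lambda>_. 0) has_real_derivative 0) (at t)" by simp
  then have "(fn n has_real_derivative 0) (at t)"
    by (rule has_field_derivative_transform_within_open[of _ _ _ "{..<0}"]) (use assms in \<open>auto simp: fn_def\<close>)
  then show ?thesis using assms by (simp add: fn_def)
qed

lemma fn0: "fn k 0 = 0" by (simp add: fn_def)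

lemma fn_deriv_0:
  shows "(fn n has_real_derivative (fn (n+2) 0 - real n * fn (n+1) 0)) (at 0)"
proof -
  have r: "((\<lambda>s. fn n s / s) \<longlongrightarrow> 0) (at_right 0)"
  proof -
    have "\<forall>\<^sub>F s in at_right 0. exp (- 1 / s) / s ^ (n+1) = fn n s / s"
      using eventually_at_right_less[of "0::real"] by (rule eventually_mono) (simp add: fn_def)
    then show ?thesis using fn_lim0[of "n+1"] by (rule Lim_transform_eventually[rotated])
  qed
  have l: "((\<lambda>s. fn n s / s) \<longlongrightarrow> 0) (at_left 0)"
  proof -
    have "\<forall>\<^sub>F s in at_left 0. 0 = fn n s / s"
    proof -
      have "\<forall>\<^sub>F s in at_left (0::real). s < 0"
        by (simp add: eventually_at_filter)
      then show ?thesis by (rule eventually_mono) (simp add: fn_def)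
    qed
    then show ?thesis by (rule Lim_transform_eventually[rotated]) simp
  qed
  have "((\<lambda>s. fn n s / s) \<longlongrightarrow> 0) (at 0)"
    using l r by (rule filterlim_split_at)
  then have "(fn n has_real_derivative 0) (at 0)"
    unfolding DERIV_def by (simp add: fn0)
  then show ?thesis
    by (simp add: fn0)
qed

lemma fn_deriv: "(fn n has_real_derivative (fn (n+2) t - real n * fn (n+1) t)) (at t)"
proof -
  consider "t > 0" | "t < 0" | "t = 0" by linarith
  then show ?thesis
  proof cases
    case 1 then show ?thesis by (rule fn_deriv_pos)
  next
    case 2 then show ?thesis by (rule fn_deriv_neg)
  next
    case 3 then show ?thesis using fn_deriv_0[of n] by simp
  qed
qed

inductive_set SC :: "('a::euclidean_space \<Rightarrow> real) set" where
  SC_const: "(\<lambda>x. c) \<in> SC"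
| SC_gen: "(\<lambda>x. fn n (x \<bullet> e + c)) \<in> SC"
| SC_add: "f \<in> SC \<Longrightarrow> g \<in> SC \<Longrightarrow> (\<lambda>x. f x + g x) \<in> SC"
| SC_mult: "f \<in> SC \<Longrightarrow> g \<in> SC \<Longrightarrow> (\<lambda>x. f x * g x) \<in> SC"

lemma SC_deriv:
  assumes "f \<in> SC"
  shows "\<exists>D. (\<forall>x. (f has_derivative D x) (at x)) \<and> (\<forall>v. (\<lambda>x. D x v) \<in> SC)"
  using assms
proof induction
  case (SC_const c)
  show ?case
    by (rule exI[of _ "\<lambda>x v. 0"]) (auto intro: SC.SC_const)
next
  case (SC_gen n e c)
  define F where "F t = fn (n+2) t - real n * fn (n+1) t" for t
  have "((\<lambda>x. fn n (x \<bullet> e + c)) has_derivative (\<lambda>v. F (x \<bullet> e + c) * (v \<bullet> e))) (at x)" for x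
  proof -
    have l: "((\<lambda>x. x \<bullet> e + c) has_derivative (\<lambda>v. v \<bullet> e)) (at x)"
      by (auto intro!: derivative_eq_intros)
    have "(fn n has_derivative (\<lambda>h. F (x \<bullet> e + c) * h)) (at (x \<bullet> e + c))"
      using fn_deriv[of n "x \<bullet> e + c"] unfolding F_def has_field_derivative_def by simp
    from has_derivative_compose[OF l this] show ?thesis by simp
  qed
  moreover have "(\<lambda>x. F (x \<bullet> e + c) * (v \<bullet> e)) \<in> SC" for v
  proof -
    have "(\<lambda>x. (fn (n+2) (x \<bullet> e + c) + (\<lambda>_. - real n) x * fn (n+1) (x \<bullet> e + c)) * (\<lambda>_. v \<bullet> e) x) \<in> SC"
      by (intro SC.intros)
    then show ?thesis by (simp add: F_def)
  qed
  ultimately show ?case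
    by (intro exI[of _ "\<lambda>x v. F (x \<bullet> e + c) * (v \<bullet> e)"]) auto
next
  case (SC_add f g)
  then obtain Df Dg where f: "\<And>x. (f has_derivative Df x) (at x)" "\<And>v. (\<lambda>x. Df x v) \<in> SC"
    and g: "\<And>x. (g has_derivative Dg x) (at x)" "\<And>v. (\<lambda>x. Dg x v) \<in> SC" by blast
  show ?case
    apply (rule exI[of _ "\<lambda>x v. Df x v + Dg x v"])
    using f g by (auto intro!: has_derivative_add SC.SC_add)
next
  case (SC_mult f g)
  then obtain Df Dg where f: "\<And>x. (f has_derivative Df x) (at x)" "\<And>v. (\<lambda>x. Df x v) \<in> SC"
    and g: "\<And>x. (g has_derivative Dg x) (at x)" "\<And>v. (\<lambda>x. Dg x v) \<in> SC" by blast
  show ?case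
    apply (rule exI[of _ "\<lambda>x v. f x * Dg x v + Df x v * g x"])
    using f g SC_mult.hyps by (auto intro!: has_derivative_mult SC.SC_add SC.SC_mult)
qed

lemma SC_frechet:
  assumes "f \<in> SC"
  shows "(\<lambda>x. frechet_derivative f (at x) v) \<in> SC" "f differentiable (at x)"
proof -
  obtain D where D: "\<And>x. (f has_derivative D x) (at x)" "\<And>v. (\<lambda>x. D x v) \<in> SC"
    using SC_deriv[OF assms] by blast
  have "frechet_derivative f (at x) = D x" for x
    using D(1) frechet_derivative_at by metis
  then show "(\<lambda>x. frechet_derivative f (at x) v) \<in> SC" using D(2) by simp
  show "f differentiable (at x)" using D(1) differentiable_def by blast
qed

lemma SC_iter: "f \<in> SC \<Longrightarrow> iter_deriv f es \<in> SC"
  by (induction es) (auto intro: SC_frechet)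

lemma SC_smooth: "f \<in> SC \<Longrightarrow> smooth f"
  unfolding smooth_def using SC_iter SC_frechet(2) by blast

lemma cont_meas: "continuous_on UNIV f \<Longrightarrow> (f::'a::euclidean_space \<Rightarrow> real) \<in> borel_measurable lebesgue"
  using measurable_compose[OF id_borel_measurable_lebesgue borel_measurable_continuous_onI, of f]
  by (simp add: id_def)

lemma SC_cont: "f \<in> SC \<Longrightarrow> continuous_on UNIV f"
  using SC_frechet(2) differentiable_imp_continuous_within continuous_at_imp_continuous_on by blast

lemma SC_prod: "finite A \<Longrightarrow> (\<And>i. i \<in> A \<Longrightarrow> g i \<in> SC) \<Longrightarrow> (\<lambda>x. \<Prod>i\<in>A. g i x) \<in> SC"
proof (induction A rule: finite_induct)
  case empty then show ?case by (simp add: SC_const)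
next
  case (insert j F)
  then have "(\<lambda>x. g j x * (\<Prod>i\<in>F. g i x)) \<in> SC" by (intro SC_mult) auto
  then show ?case using insert by simp
qed

lemma SC_pow: "f \<in> SC \<Longrightarrow> (\<lambda>x. f x ^ k) \<in> SC"
proof (induction k)
  case 0 then show ?case by (simp add: SC_const)
next
  case (Suc k)
  then have "(\<lambda>x. f x * f x ^ k) \<in> SC" by (intro SC_mult) auto
  then show ?case by simp
qed

lemma fn0_ge: "0 \<le> fn 0 t" by (simp add: fn_def)
lemma fn0_le: "fn 0 t \<le> 1" by (simp add: fn_def)
lemma fn0_pos: "0 < fn 0 t \<longleftrightarrow> 0 < t" by (simp add: fn_def)

definition Pb :: "'a::euclidean_space \<Rightarrow> 'a \<Rightarrow> 'a \<Rightarrow> real" where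
  "Pb a b x = (\<Prod>i\<in>Basis. fn 0 (x \<bullet> i - a \<bullet> i) * fn 0 (b \<bullet> i - x \<bullet> i))"

lemma Pb_SC: "Pb a b \<in> SC"
proof -
  have "(\<lambda>x. \<Prod>i\<in>Basis. (\<lambda>x. fn 0 (x \<bullet> i + - (a \<bullet> i)) * fn 0 (x \<bullet> (- i) + b \<bullet> i)) x) \<in> SC"
    by (intro SC_prod SC_mult SC_gen) auto
  then show ?thesis unfolding Pb_def[abs_def] by simp
qed

lemma Pb_ge: "0 \<le> Pb a b x"
  unfolding Pb_def by (intro prod_nonneg mult_nonneg_nonneg fn0_ge)

lemma Pb_le: "Pb a b x \<le> 1"
  unfolding Pb_def by (intro prod_le_1 conjI mult_nonneg_nonneg fn0_ge mult_le_one fn0_le)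

lemma Pb_pos: "0 < Pb a b x \<longleftrightarrow> x \<in> box a b"
proof
  assume "x \<in> box a b"
  then show "0 < Pb a b x"
    unfolding Pb_def mem_box by (intro prod_pos mult_pos_pos) (auto simp: fn0_pos)
next
  assume p: "0 < Pb a b x"
  show "x \<in> box a b" unfolding mem_box
  proof
    fix i :: 'a assume i: "i \<in> Basis"
    show "a \<bullet> i < x \<bullet> i \<and> x \<bullet> i < b \<bullet> i"
    proof (rule ccontr)
      assume "\<not> ?thesis"
      then have "fn 0 (x \<bullet> i - a \<bullet> i) * fn 0 (b \<bullet> i - x \<bullet> i) = 0"
        by (auto simp: fn_def)
      then have "Pb a b x = 0" unfolding Pb_def using i by (intro prod_zero) auto
      then show False using p by simp
    qed
  qed
qed

definition phk :: "'a::euclidean_space \<Rightarrow> 'a \<Rightarrow> nat \<Rightarrow> 'a \<Rightarrow> real" where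
  "phk a b k x = 1 - (1 - Pb a b x) ^ k"

lemma phk_SC: "phk a b k \<in> SC"
proof -
  have "(\<lambda>x. (\<lambda>_. 1) x + (\<lambda>_. -1) x * (\<lambda>x. (\<lambda>x. (\<lambda>_. 1) x + (\<lambda>_. -1) x * Pb a b x) x ^ k) x) \<in> SC"
    by (intro SC_add SC_mult SC_const SC_pow Pb_SC)
  then show ?thesis unfolding phk_def[abs_def] by simp
qed

lemma phk_bound: "0 \<le> phk a b k x" "phk a b k x \<le> 1"
proof -
  have "0 \<le> 1 - Pb a b x" "1 - Pb a b x \<le> 1" using Pb_ge Pb_le by auto
  then have "0 \<le> (1 - Pb a b x) ^ k" "(1 - Pb a b x) ^ k \<le> 1"
    by (auto intro: power_le_one)
  then show "0 \<le> phk a b k x" "phk a b k x \<le> 1" unfolding phk_def by auto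
qed

lemma phk_zero: "x \<notin> box a b \<Longrightarrow> phk a b k x = 0"
proof -
  assume "x \<notin> box a b"
  then have "Pb a b x = 0" using Pb_pos Pb_ge by (metis less_eq_real_def)
  then show ?thesis by (simp add: phk_def)
qed

lemma phk_lim: "(\<lambda>k. phk a b k x) \<longlonglongrightarrow> indicator (box a b) x"
proof (cases "x \<in> box a b")
  case True
  then have "0 < Pb a b x" using Pb_pos by blast
  then have "norm (1 - Pb a b x) < 1" using Pb_le[of a b x] by auto
  then have "(\<lambda>k. (1 - Pb a b x) ^ k) \<longlonglongrightarrow> 0" using LIMSEQ_power_zero[of "1 - Pb a b x"] by simp
  then have "(\<lambda>k. 1 - (1 - Pb a b x) ^ k) \<longlonglongrightarrow> 1 - 0" by (rule tendsto_diff[OF tendsto_const])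
  then show ?thesis using True by (simp add: phk_def)
next
  case False
  then show ?thesis by (simp add: phk_zero)
qed

lemma phk_test:
  assumes "cbox a b \<subseteq> \<Omega>"
  shows "test_fun \<Omega> (phk a b k)"
proof -
  have sub: "{x. phk a b k x \<noteq> 0} \<subseteq> cbox a b"
    using phk_zero box_subset_cbox by blast
  then have "tsupport (phk a b k) \<subseteq> cbox a b"
    unfolding tsupport_def by (intro closure_minimal) auto
  moreover have "compact (tsupport (phk a b k))"
  proof -
    have "closed (tsupport (phk a b k))" unfolding tsupport_def by simp
    moreover have "bounded (tsupport (phk a b k))"
      using \<open>tsupport (phk a b k) \<subseteq> cbox a b\<close> bounded_cbox bounded_subset by blast
    ultimately show ?thesis using compact_eq_bounded_closed by blast
  qed
  ultimately show ?thesis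
    unfolding test_fun_def using assms SC_smooth[OF phk_SC] by blast
qed

lemma FL_box:
  fixes h :: "'a::euclidean_space \<Rightarrow> real"
  assumes hi: "set_integrable lebesgue \<Omega> h"
    and ht: "\<And>\<phi>. test_fun \<Omega> \<phi> \<Longrightarrow> (\<integral>x\<in>\<Omega>. h x * \<phi> x \<partial>lebesgue) = 0"
    and sub: "cbox a b \<subseteq> \<Omega>"
  shows "(LINT x|lebesgue. indicator \<Omega> x * (h x * indicator (box a b) x)) = 0"
proof -
  have hI: "integrable lebesgue (\<lambda>x. indicator \<Omega> x * h x)" using hi by (simp add: set_integrable_def)
  have hM: "(\<lambda>x. indicator \<Omega> x * h x) \<in> borel_measurable lebesgue" using hI by auto
  have lim: "(\<lambda>k. LINT x|lebesgue. indicator \<Omega> x * (h x * phk a b k x)) \<longlonglongrightarrow>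
      (LINT x|lebesgue. indicator \<Omega> x * (h x * indicator (box a b) x))"
  proof (rule integral_dominated_convergence[where w="\<lambda>x. norm (indicator \<Omega> x * h x)"])
    have "(\<lambda>x. (indicator \<Omega> x * h x) * indicator (box a b) x) \<in> borel_measurable lebesgue"
      by (rule borel_measurable_times[OF hM borel_measurable_indicator]) simp
    then show "(\<lambda>x. indicator \<Omega> x * (h x * indicator (box a b) x)) \<in> borel_measurable lebesgue"
      by (simp add: mult_ac)
    show "(\<lambda>x. indicator \<Omega> x * (h x * phk a b k x)) \<in> borel_measurable lebesgue" for k
    proof -
      have "(\<lambda>x. (indicator \<Omega> x * h x) * phk a b k x) \<in> borel_measurable lebesgue"
        by (rule borel_measurable_times[OF hM cont_meas[OF SC_cont[OF phk_SC]]])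
      then show ?thesis by (simp add: mult_ac)
    qed
    show "integrable lebesgue (\<lambda>x. norm (indicator \<Omega> x * h x))" using hI by auto
    show "AE x in lebesgue. (\<lambda>k. indicator \<Omega> x * (h x * phk a b k x)) \<longlonglongrightarrow>
        indicator \<Omega> x * (h x * indicator (box a b) x)"
      by (intro AE_I2 tendsto_mult_left phk_lim)
    show "AE x in lebesgue. norm (indicator \<Omega> x * (h x * phk a b k x)) \<le> norm (indicator \<Omega> x * h x)" for k
    proof (intro AE_I2)
      fix x
      have "\<bar>indicator \<Omega> x * h x\<bar> * \<bar>phk a b k x\<bar> \<le> \<bar>indicator \<Omega> x * h x\<bar> * 1"
        using phk_bound[of a b k x] by (intro mult_left_mono) auto
      then show "norm (indicator \<Omega> x * (h x * phk a b k x)) \<le> norm (indicator \<Omega> x * h x)"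
        by (simp add: abs_mult mult_ac)
    qed
  qed
  moreover have "(LINT x|lebesgue. indicator \<Omega> x * (h x * phk a b k x)) = 0" for k
    using ht[OF phk_test[OF sub]] by (simp add: set_lebesgue_integral_def)
  ultimately show ?thesis by (simp add: LIMSEQ_const_iff)
qed

lemma FL:
  fixes h :: "'a::euclidean_space \<Rightarrow> real"
  assumes Om: "open \<Omega>" and hi: "set_integrable lebesgue \<Omega> h"
    and ht: "\<And>\<phi>. test_fun \<Omega> \<phi> \<Longrightarrow> (\<integral>x\<in>\<Omega>. h x * \<phi> x \<partial>lebesgue) = 0"
  shows "AE x in lebesgue. x \<in> \<Omega> \<longrightarrow> h x = 0"
proof -
  define H where "H x = indicator \<Omega> x * h x" for x
  have HI: "integrable lebesgue H" using hi by (simp add: set_integrable_def H_def[abs_def])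
  have Hon: "H integrable_on cbox a b" for a b
    using integrable_on_lebesgue[OF HI] integrable_on_subcbox by blast
  have Hbox: "integral (cbox a b) H = 0" if sub: "cbox a b \<subseteq> \<Omega>" for a b
  proof -
    have "set_integrable lebesgue (box a b) H"
      unfolding set_integrable_def by (rule integrable_mult_indicator) (use HI in auto)
    then have "(H has_integral (set_lebesgue_integral lebesgue (box a b) H)) (box a b)"
      by (rule has_integral_set_lebesgue)
    moreover have "set_lebesgue_integral lebesgue (box a b) H = 0"
      using FL_box[OF hi ht sub] unfolding set_lebesgue_integral_def H_def by (simp add: mult_ac)
    ultimately have "(H has_integral 0) (box a b)" by simp
    then have "(H has_integral 0) (cbox a b)" by (simp only: has_integral_open_interval)
    then show ?thesis by (rule integral_unique)
  qed
  obtain N where N: "negligible N"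
    "\<And>x e. x \<notin> N \<Longrightarrow> 0 < e \<Longrightarrow> \<exists>d>0. \<forall>h. 0 < h \<and> h < d \<longrightarrow>
        norm (integral (cbox x (x + h *\<^sub>R One)) H /\<^sub>R h ^ DIM('a) - H x) < e"
    using integrable_ccontinuous_explicit[of H] Hon by blast
  have "H x = 0" if xO: "x \<in> \<Omega>" and xN: "x \<notin> N" for x
  proof (rule ccontr)
    assume Hx: "H x \<noteq> 0"
    obtain r where r: "r > 0" "ball x r \<subseteq> \<Omega>" using Om xO open_contains_ball by blast
    obtain d where d: "d > 0" "\<And>h. 0 < h \<Longrightarrow> h < d \<Longrightarrow>
        norm (integral (cbox x (x + h *\<^sub>R One)) H /\<^sub>R h ^ DIM('a) - H x) < norm (H x)"
      using N(2)[OF xN, of "norm (H x)"] Hx by auto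
    define \<delta> where "\<delta> = min d (r / (2 * real DIM('a))) / 2"
    have DIMp: "real DIM('a) > 0" by simp
    have dpos: "\<delta> > 0" unfolding \<delta>_def using d r DIMp by simp
    have dd: "\<delta> < d" unfolding \<delta>_def using d by simp
    have dr: "real DIM('a) * \<delta> < r"
    proof -
      have "\<delta> \<le> r / (2 * real DIM('a)) / 2" unfolding \<delta>_def by simp
      then have "real DIM('a) * \<delta> \<le> real DIM('a) * (r / (2 * real DIM('a)) / 2)"
        using DIMp by (intro mult_left_mono) auto
      also have "\<dots> = r / 4" using DIMp by (simp add: field_simps)
      finally show ?thesis using r by simp
    qed
    have "cbox x (x + \<delta> *\<^sub>R One) \<subseteq> ball x r"
    proof
      fix y assume "y \<in> cbox x (x + \<delta> *\<^sub>R One)"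
      then have yi: "\<And>i. i \<in> Basis \<Longrightarrow> x \<bullet> i \<le> y \<bullet> i \<and> y \<bullet> i \<le> x \<bullet> i + \<delta>"
        by (auto simp: mem_box inner_add_left)
      have "norm (y - x) \<le> (\<Sum>i\<in>Basis. \<bar>(y - x) \<bullet> i\<bar>)" by (rule norm_le_l1)
      also have "\<dots> \<le> of_nat (card (Basis::'a set)) * \<delta>"
      proof (rule sum_bounded_above)
        fix i :: 'a assume "i \<in> Basis"
        then show "\<bar>(y - x) \<bullet> i\<bar> \<le> \<delta>" using yi[of i] by (simp add: inner_diff_left)
      qed
      finally have "norm (y - x) < r" using dr by simp
      then show "y \<in> ball x r" by (simp add: dist_norm norm_minus_commute)
    qed
    then have "integral (cbox x (x + \<delta> *\<^sub>R One)) H = 0" using Hbox r by blast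
    then have "norm (0 - H x) < norm (H x)" using d(2)[OF dpos dd] by simp
    then show False by simp
  qed
  then have sub: "{x \<in> space lebesgue. \<not> (x \<in> \<Omega> \<longrightarrow> h x = 0)} \<subseteq> N" by (auto simp: H_def)
  show ?thesis by (rule AE_I'[OF _ sub]) (use N(1) negligible_iff_null_sets in blast)
qed

lemma L2_prod:
  assumes u: "L2fun \<Omega> u" and v: "L2fun \<Omega> v"
  shows "set_integrable lebesgue \<Omega> (\<lambda>x. u x * v x)"
proof -
  have um: "(\<lambda>x. indicator \<Omega> x * u x) \<in> borel_measurable lebesgue"
    and vm: "(\<lambda>x. indicator \<Omega> x * v x) \<in> borel_measurable lebesgue"
    using u v by (auto simp: L2fun_def set_borel_measurable_def)
  have ui: "set_integrable lebesgue \<Omega> (\<lambda>x. (u x)^2)" and vi: "set_integrable lebesgue \<Omega> (\<lambda>x. (v x)^2)"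
    using u v by (auto simp: L2fun_def)
  have si: "set_integrable lebesgue \<Omega> (\<lambda>x. (u x)^2 + (v x)^2)"
    using set_integral_add(1)[OF ui vi] .
  have m: "(\<lambda>x. indicator \<Omega> x * (u x * v x)) \<in> borel_measurable lebesgue"
  proof -
    have "(\<lambda>x. (indicator \<Omega> x * u x) * (indicator \<Omega> x * v x)) \<in> borel_measurable lebesgue"
      using um vm by (rule borel_measurable_times)
    moreover have "(\<lambda>x. (indicator \<Omega> x * u x) * (indicator \<Omega> x * v x)) = (\<lambda>x. indicator \<Omega> x * (u x * v x))"
      by (auto simp: indicator_def)
    ultimately show ?thesis by simp
  qed
  have "integrable lebesgue (\<lambda>x. indicator \<Omega> x * (u x * v x))"
  proof (rule Bochner_Integration.integrable_bound)
    show "integrable lebesgue (\<lambda>x. indicator \<Omega> x * ((u x)^2 + (v x)^2))"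
      using si by (simp add: set_integrable_def)
    show "(\<lambda>x. indicator \<Omega> x * (u x * v x)) \<in> borel_measurable lebesgue" by (rule m)
    show "AE x in lebesgue. norm (indicator \<Omega> x * (u x * v x)) \<le> norm (indicator \<Omega> x * ((u x)^2 + (v x)^2))"
    proof (rule AE_I2)
      fix x
      have "\<bar>u x * v x\<bar> \<le> (u x)^2 + (v x)^2"
      proof -
        have "0 \<le> (\<bar>u x\<bar> - \<bar>v x\<bar>)^2" by simp
        then have "2 * (\<bar>u x\<bar> * \<bar>v x\<bar>) \<le> (u x)^2 + (v x)^2" by (simp add: power2_eq_square algebra_simps)
        moreover have "0 \<le> \<bar>u x\<bar> * \<bar>v x\<bar>" by simp
        ultimately show ?thesis unfolding abs_mult by linarith
      qed
      then have b2: "\<bar>u x * v x\<bar> \<le> \<bar>(u x)^2 + (v x)^2\<bar>" by (rule order_trans[OF _ abs_ge_self])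
      show "norm (indicator \<Omega> x * (u x * v x)) \<le> norm (indicator \<Omega> x * ((u x)^2 + (v x)^2))"
      proof (cases "x \<in> \<Omega>")
        case True then show ?thesis using b2 by simp
      next
        case False then show ?thesis by simp
      qed
    qed
  qed
  then show ?thesis by (simp add: set_integrable_def)
qed

lemma L2_const1:
  assumes "open \<Omega>" "bounded \<Omega>"
  shows "L2fun \<Omega> (\<lambda>x. 1)"
proof -
  have "\<Omega> \<in> lmeasurable" using assms by (intro bounded_set_imp_lmeasurable) auto
  have m: "set_borel_measurable lebesgue \<Omega> (\<lambda>x. 1::real)"
    unfolding set_borel_measurable_def using assms(1) by (simp add: borel_measurable_indicator)
  have i: "set_integrable lebesgue \<Omega> (\<lambda>x. (1::real)^2)"
    using absolutely_integrable_on_const[OF \<open>\<Omega> \<in> lmeasurable\<close>, of 1] by simp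
  show ?thesis unfolding L2fun_def using m i by blast
qed

lemma L2_L1:
  assumes "open \<Omega>" "bounded \<Omega>" "L2fun \<Omega> u"
  shows "set_integrable lebesgue \<Omega> u"
  using L2_prod[OF assms(3) L2_const1[OF assms(1,2)]] by simp

lemma cont_bdd:
  fixes \<phi> :: "'a::euclidean_space \<Rightarrow> real"
  assumes "continuous_on UNIV \<phi>" "bounded \<Omega>"
  obtains B where "B > 0" "\<And>x. x \<in> \<Omega> \<Longrightarrow> \<bar>\<phi> x\<bar> \<le> (B::real)"
proof -
  have "compact (closure \<Omega>)" using assms(2) bounded_closure compact_eq_bounded_closed closed_closure by blast
  then have "compact (\<phi> ` closure \<Omega>)"
    by (rule compact_continuous_image[OF continuous_on_subset[OF assms(1) subset_UNIV]])
  then have "bounded (\<phi> ` closure \<Omega>)" by (rule compact_imp_bounded)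
  then obtain B where B: "B > 0" "\<And>y. y \<in> \<phi> ` closure \<Omega> \<Longrightarrow> norm y \<le> B"
    using bounded_pos by metis
  have "\<bar>\<phi> x\<bar> \<le> B" if "x \<in> \<Omega>" for x
  proof -
    have "\<phi> x \<in> \<phi> ` closure \<Omega>" using that closure_subset by blast
    then show ?thesis using B(2) by simp
  qed
  then show ?thesis using that B(1) by blast
qed

lemma int_cont:
  fixes \<phi> :: "'a::euclidean_space \<Rightarrow> real"
  assumes ui: "set_integrable lebesgue \<Omega> u" and c: "continuous_on UNIV \<phi>" and b: "bounded \<Omega>"
  shows "set_integrable lebesgue \<Omega> (\<lambda>x. u x * \<phi> x)"
proof -
  obtain B where B: "B > 0" "\<And>x. x \<in> \<Omega> \<Longrightarrow> \<bar>\<phi> x\<bar> \<le> B" using cont_bdd[OF c b] by blast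
  have uI: "integrable lebesgue (\<lambda>x. indicator \<Omega> x * u x)" using ui by (simp add: set_integrable_def)
  have "integrable lebesgue (\<lambda>x. indicator \<Omega> x * (u x * \<phi> x))"
  proof (rule Bochner_Integration.integrable_bound)
    show "integrable lebesgue (\<lambda>x. B * (indicator \<Omega> x * u x))" using uI by simp
    have "(\<lambda>x. (indicator \<Omega> x * u x) * \<phi> x) \<in> borel_measurable lebesgue"
      using borel_measurable_integrable[OF uI] cont_meas[OF c] by (rule borel_measurable_times)
    then show "(\<lambda>x. indicator \<Omega> x * (u x * \<phi> x)) \<in> borel_measurable lebesgue" by (simp add: mult_ac)
    show "AE x in lebesgue. norm (indicator \<Omega> x * (u x * \<phi> x)) \<le> norm (B * (indicator \<Omega> x * u x))"
    proof (rule AE_I2)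
      fix x
      show "norm (indicator \<Omega> x * (u x * \<phi> x)) \<le> norm (B * (indicator \<Omega> x * u x))"
      proof (cases "x \<in> \<Omega>")
        case True
        then have "\<bar>u x\<bar> * \<bar>\<phi> x\<bar> \<le> \<bar>u x\<bar> * B" using B by (intro mult_left_mono) auto
        then show ?thesis using True B by (simp add: abs_mult mult_ac)
      qed simp
    qed
  qed
  then show ?thesis by (simp add: set_integrable_def)
qed

lemma test_cont:
  assumes "test_fun \<Omega> \<phi>" "i \<in> Basis"
  shows "continuous_on UNIV \<phi>" "continuous_on UNIV (\<lambda>x. frechet_derivative \<phi> (at x) i)"
proof -
  have s: "smooth \<phi>" using assms by (simp add: test_fun_def)
  have "\<forall>es. set es \<subseteq> Basis \<longrightarrow> (\<forall>x. iter_deriv \<phi> es differentiable (at x))"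
    using s unfolding smooth_def by blast
  then have d: "\<And>es x. set es \<subseteq> Basis \<Longrightarrow> iter_deriv \<phi> es differentiable (at x)" by blast
  have "\<And>x. iter_deriv \<phi> [] differentiable (at x)" by (rule d) simp
  then show "continuous_on UNIV \<phi>"
    by (auto intro!: continuous_at_imp_continuous_on differentiable_imp_continuous_within)
  have "\<And>x. iter_deriv \<phi> [i] differentiable (at x)" by (rule d) (simp add: assms(2))
  then show "continuous_on UNIV (\<lambda>x. frechet_derivative \<phi> (at x) i)"
    by (auto intro!: continuous_at_imp_continuous_on differentiable_imp_continuous_within)
qed

lemma wgrad_H1: "u \<in> H10 \<Omega> \<Longrightarrow> H1_with_grad \<Omega> u (wgrad \<Omega> u)"
proof -
  assume "u \<in> H10 \<Omega>"
  then obtain g where "H1_with_grad \<Omega> u g" unfolding H10_def by blast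
  then show ?thesis unfolding wgrad_def by (metis someI)
qed

lemma H1_L1grad:
  assumes "open \<Omega>" "bounded \<Omega>" "H1_with_grad \<Omega> u g" "i \<in> Basis" "test_fun \<Omega> \<phi>"
  shows "set_integrable lebesgue \<Omega> (\<lambda>x. (g x \<bullet> i) * \<phi> x)"
    "set_integrable lebesgue \<Omega> (\<lambda>x. u x * frechet_derivative \<phi> (at x) i)"
    "set_integrable lebesgue \<Omega> (\<lambda>x. g x \<bullet> i)"
proof -
  show gi: "set_integrable lebesgue \<Omega> (\<lambda>x. g x \<bullet> i)"
    using assms L2_L1 unfolding H1_with_grad_def by blast
  show "set_integrable lebesgue \<Omega> (\<lambda>x. (g x \<bullet> i) * \<phi> x)"
    using int_cont[OF gi test_cont(1)[OF assms(5,4)] assms(2)] .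
  have "set_integrable lebesgue \<Omega> u" using assms L2_L1 unfolding H1_with_grad_def by blast
  then show "set_integrable lebesgue \<Omega> (\<lambda>x. u x * frechet_derivative \<phi> (at x) i)"
    using int_cont[OF _ test_cont(2)[OF assms(5,4)] assms(2)] by blast
qed

lemma wg_diff:
  assumes Om: "open \<Omega>" "bounded \<Omega>" and u: "H1_with_grad \<Omega> u g" and v: "H1_with_grad \<Omega> v g'"
  shows "is_weak_grad \<Omega> (\<lambda>x. u x - v x) (\<lambda>x. g x - g' x)"
  unfolding is_weak_grad_def
proof (intro allI impI ballI)
  fix \<phi> and i :: 'a assume \<phi>: "test_fun \<Omega> \<phi>" and i: "i \<in> Basis"
  note U = H1_L1grad[OF Om u i \<phi>] and V = H1_L1grad[OF Om v i \<phi>]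
  have wu: "(\<integral>x\<in>\<Omega>. u x * frechet_derivative \<phi> (at x) i \<partial>lebesgue) = - (\<integral>x\<in>\<Omega>. (g x \<bullet> i) * \<phi> x \<partial>lebesgue)"
    using u \<phi> i unfolding H1_with_grad_def is_weak_grad_def by blast
  have wv: "(\<integral>x\<in>\<Omega>. v x * frechet_derivative \<phi> (at x) i \<partial>lebesgue) = - (\<integral>x\<in>\<Omega>. (g' x \<bullet> i) * \<phi> x \<partial>lebesgue)"
    using v \<phi> i unfolding H1_with_grad_def is_weak_grad_def by blast
  have "(\<integral>x\<in>\<Omega>. (u x - v x) * frechet_derivative \<phi> (at x) i \<partial>lebesgue)
      = (\<integral>x\<in>\<Omega>. u x * frechet_derivative \<phi> (at x) i - v x * frechet_derivative \<phi> (at x) i \<partial>lebesgue)"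
    by (simp add: left_diff_distrib)
  also have "\<dots> = (\<integral>x\<in>\<Omega>. u x * frechet_derivative \<phi> (at x) i \<partial>lebesgue) - (\<integral>x\<in>\<Omega>. v x * frechet_derivative \<phi> (at x) i \<partial>lebesgue)"
    by (rule set_integral_diff(2)[OF U(2) V(2)])
  also have "\<dots> = - ((\<integral>x\<in>\<Omega>. (g x \<bullet> i) * \<phi> x \<partial>lebesgue) - (\<integral>x\<in>\<Omega>. (g' x \<bullet> i) * \<phi> x \<partial>lebesgue))"
    using wu wv by simp
  also have "(\<integral>x\<in>\<Omega>. (g x \<bullet> i) * \<phi> x \<partial>lebesgue) - (\<integral>x\<in>\<Omega>. (g' x \<bullet> i) * \<phi> x \<partial>lebesgue)
      = (\<integral>x\<in>\<Omega>. (g x \<bullet> i) * \<phi> x - (g' x \<bullet> i) * \<phi> x \<partial>lebesgue)"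
    by (rule set_integral_diff(2)[OF U(1) V(1), symmetric])
  also have "\<dots> = (\<integral>x\<in>\<Omega>. ((g x - g' x) \<bullet> i) * \<phi> x \<partial>lebesgue)"
    by (simp add: inner_diff_left left_diff_distrib)
  finally show "(\<integral>x\<in>\<Omega>. (u x - v x) * frechet_derivative \<phi> (at x) i \<partial>lebesgue)
      = - (\<integral>x\<in>\<Omega>. ((g x - g' x) \<bullet> i) * \<phi> x \<partial>lebesgue)" .
qed

lemma wg_unique:
  assumes Om: "open \<Omega>" "bounded \<Omega>" and g1: "H1_with_grad \<Omega> u g1" and g2: "H1_with_grad \<Omega> u g2"
  shows "AE x in lebesgue. x \<in> \<Omega> \<longrightarrow> g1 x = g2 x"
proof -
  have "AE x in lebesgue. \<forall>i\<in>Basis. x \<in> \<Omega> \<longrightarrow> g1 x \<bullet> i = g2 x \<bullet> i"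
  proof (rule AE_finite_allI[OF finite_Basis])
    fix i :: 'a assume i: "i \<in> Basis"
    have "AE x in lebesgue. x \<in> \<Omega> \<longrightarrow> g1 x \<bullet> i - g2 x \<bullet> i = 0"
    proof (rule FL[OF Om(1)])
      have "set_integrable lebesgue \<Omega> (\<lambda>x. g1 x \<bullet> i)" "set_integrable lebesgue \<Omega> (\<lambda>x. g2 x \<bullet> i)"
        using g1 g2 Om i L2_L1 unfolding H1_with_grad_def by blast+
      then show "set_integrable lebesgue \<Omega> (\<lambda>x. g1 x \<bullet> i - g2 x \<bullet> i)" by (rule set_integral_diff(1))
    next
      fix \<phi> assume \<phi>: "test_fun \<Omega> \<phi>"
      note U = H1_L1grad[OF Om g1 i \<phi>] and V = H1_L1grad[OF Om g2 i \<phi>]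
      have wu: "(\<integral>x\<in>\<Omega>. u x * frechet_derivative \<phi> (at x) i \<partial>lebesgue) = - (\<integral>x\<in>\<Omega>. (g1 x \<bullet> i) * \<phi> x \<partial>lebesgue)"
        using g1 \<phi> i unfolding H1_with_grad_def is_weak_grad_def by blast
      have wv: "(\<integral>x\<in>\<Omega>. u x * frechet_derivative \<phi> (at x) i \<partial>lebesgue) = - (\<integral>x\<in>\<Omega>. (g2 x \<bullet> i) * \<phi> x \<partial>lebesgue)"
        using g2 \<phi> i unfolding H1_with_grad_def is_weak_grad_def by blast
      have "(\<integral>x\<in>\<Omega>. (g1 x \<bullet> i - g2 x \<bullet> i) * \<phi> x \<partial>lebesgue) = (\<integral>x\<in>\<Omega>. (g1 x \<bullet> i) * \<phi> x - (g2 x \<bullet> i) * \<phi> x \<partial>lebesgue)"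
        by (simp add: left_diff_distrib)
      also have "\<dots> = (\<integral>x\<in>\<Omega>. (g1 x \<bullet> i) * \<phi> x \<partial>lebesgue) - (\<integral>x\<in>\<Omega>. (g2 x \<bullet> i) * \<phi> x \<partial>lebesgue)"
        by (rule set_integral_diff(2)[OF U(1) V(1)])
      also have "\<dots> = 0" using wu wv by simp
      finally show "(\<integral>x\<in>\<Omega>. (g1 x \<bullet> i - g2 x \<bullet> i) * \<phi> x \<partial>lebesgue) = 0" .
    qed
    then show "AE x in lebesgue. x \<in> \<Omega> \<longrightarrow> g1 x \<bullet> i = g2 x \<bullet> i"
      by (rule eventually_mono) simp
  qed
  then show ?thesis by (rule eventually_mono) (auto intro: euclidean_eqI)
qed

lemma L2_diff:
  assumes u: "L2fun \<Omega> u" and v: "L2fun \<Omega> v"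
  shows "L2fun \<Omega> (\<lambda>x. u x - v x)"
proof -
  have um: "(\<lambda>x. indicator \<Omega> x * u x) \<in> borel_measurable lebesgue"
    and vm: "(\<lambda>x. indicator \<Omega> x * v x) \<in> borel_measurable lebesgue"
    using u v by (auto simp: L2fun_def set_borel_measurable_def)
  have "(\<lambda>x. indicator \<Omega> x * u x - indicator \<Omega> x * v x) \<in> borel_measurable lebesgue"
    using um vm by (rule borel_measurable_diff)
  then have m: "set_borel_measurable lebesgue \<Omega> (\<lambda>x. u x - v x)"
    by (simp add: set_borel_measurable_def right_diff_distrib)
  have ui: "set_integrable lebesgue \<Omega> (\<lambda>x. (u x)^2)" and vi: "set_integrable lebesgue \<Omega> (\<lambda>x. (v x)^2)"
    using u v by (auto simp: L2fun_def)
  have "set_integrable lebesgue \<Omega> (\<lambda>x. ((u x)^2 + (v x)^2) - 2 * (u x * v x))"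
    using set_integral_add(1)[OF ui vi] L2_prod[OF u v] by (intro set_integral_diff(1)) auto
  moreover have "(\<lambda>x. ((u x)^2 + (v x)^2) - 2 * (u x * v x)) = (\<lambda>x. (u x - v x)^2)"
    by (simp add: power2_eq_square algebra_simps)
  ultimately show ?thesis using m by (simp add: L2fun_def)
qed

lemma H1_diff:
  assumes u: "H1_with_grad \<Omega> u g" and v: "H1_with_grad \<Omega> v g'" and Om: "open \<Omega>" "bounded \<Omega>"
  shows "H1_with_grad \<Omega> (\<lambda>x. u x - v x) (\<lambda>x. g x - g' x)"
proof -
  have "L2fun \<Omega> (\<lambda>x. u x - v x)" using u v L2_diff unfolding H1_with_grad_def by blast
  moreover have "L2fun \<Omega> (\<lambda>x. (g x - g' x) \<bullet> i)" if "i \<in> Basis" for i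
    using u v L2_diff[of \<Omega> "\<lambda>x. g x \<bullet> i" "\<lambda>x. g' x \<bullet> i"] that
    unfolding H1_with_grad_def by (simp add: inner_diff_left)
  moreover have "is_weak_grad \<Omega> (\<lambda>x. u x - v x) (\<lambda>x. g x - g' x)" by (rule wg_diff[OF Om u v])
  ultimately show ?thesis unfolding H1_with_grad_def by blast
qed

lemma wgrad_diff_AE:
  assumes Om: "open \<Omega>" "bounded \<Omega>" and "p \<in> H10 \<Omega>" "q \<in> H10 \<Omega>" "(\<lambda>x. p x - q x) \<in> H10 \<Omega>"
  shows "AE x in lebesgue. x \<in> \<Omega> \<longrightarrow> wgrad \<Omega> (\<lambda>x. p x - q x) x = wgrad \<Omega> p x - wgrad \<Omega> q x"
  using wg_unique[OF Om wgrad_H1[OF assms(5)] H1_diff[OF wgrad_H1[OF assms(3)] wgrad_H1[OF assms(4)] Om]] .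

lemma inner_int:
  assumes a: "\<forall>i\<in>Basis. L2fun \<Omega> (\<lambda>x. ga x \<bullet> i)" and b: "\<forall>i\<in>Basis. L2fun \<Omega> (\<lambda>x. gb x \<bullet> i)"
  shows "set_integrable lebesgue \<Omega> (\<lambda>x. (ga x :: 'a::euclidean_space) \<bullet> gb x)"
proof -
  have ii: "integrable lebesgue (\<lambda>x. indicator \<Omega> x * ((ga x \<bullet> i) * (gb x \<bullet> i)))" if i: "i \<in> Basis" for i
    using L2_prod[of \<Omega> "\<lambda>x. ga x \<bullet> i" "\<lambda>x. gb x \<bullet> i"] a b i unfolding set_integrable_def by simp
  have "integrable lebesgue (\<lambda>x. \<Sum>i\<in>Basis. indicator \<Omega> x * ((ga x \<bullet> i) * (gb x \<bullet> i)))"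
    by (rule Bochner_Integration.integrable_sum[where f="\<lambda>i x. indicator \<Omega> x * ((ga x \<bullet> i) * (gb x \<bullet> i))"]) (rule ii)
  moreover have "(\<lambda>x. \<Sum>i\<in>Basis. indicator \<Omega> x * ((ga x \<bullet> i) * (gb x \<bullet> i))) = (\<lambda>x. indicator \<Omega> x * (ga x \<bullet> gb x))"
    by (simp add: euclidean_inner[of "ga _" "gb _"] sum_distrib_left)
  ultimately show ?thesis by (simp add: set_integrable_def)
qed

lemma kappa_int:
  fixes \<kappa> f :: "'a::euclidean_space \<Rightarrow> real"
  assumes km: "set_borel_measurable lebesgue \<Omega> \<kappa>" and kb: "AE x in lebesgue. x \<in> \<Omega> \<longrightarrow> \<bar>\<kappa> x\<bar> \<le> M"
    and ab: "set_integrable lebesgue \<Omega> f"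
  shows "set_integrable lebesgue \<Omega> (\<lambda>x. \<kappa> x * f x)"
proof -
  have fI: "integrable lebesgue (\<lambda>x. indicator \<Omega> x * f x)" using ab by (simp add: set_integrable_def)
  have kI: "(\<lambda>x. indicator \<Omega> x * \<kappa> x) \<in> borel_measurable lebesgue" using km by (simp add: set_borel_measurable_def)
  have "integrable lebesgue (\<lambda>x. indicator \<Omega> x * (\<kappa> x * f x))"
  proof (rule Bochner_Integration.integrable_bound)
    show "integrable lebesgue (\<lambda>x. M * (indicator \<Omega> x * f x))" using fI by simp
    have "(\<lambda>x. (indicator \<Omega> x * \<kappa> x) * (indicator \<Omega> x * f x)) \<in> borel_measurable lebesgue"
      by (rule borel_measurable_times[OF kI borel_measurable_integrable[OF fI]])
    moreover have "(\<lambda>x. (indicator \<Omega> x * \<kappa> x) * (indicator \<Omega> x * f x)) = (\<lambda>x. indicator \<Omega> x * (\<kappa> x * f x))"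
      by (auto simp: indicator_def)
    ultimately show "(\<lambda>x. indicator \<Omega> x * (\<kappa> x * f x)) \<in> borel_measurable lebesgue" by simp
    show "AE x in lebesgue. norm (indicator \<Omega> x * (\<kappa> x * f x)) \<le> norm (M * (indicator \<Omega> x * f x))"
      using kb
    proof (rule eventually_mono)
      fix x assume h: "x \<in> \<Omega> \<longrightarrow> \<bar>\<kappa> x\<bar> \<le> M"
      show "norm (indicator \<Omega> x * (\<kappa> x * f x)) \<le> norm (M * (indicator \<Omega> x * f x))"
      proof (cases "x \<in> \<Omega>")
        case True
        then have "\<bar>\<kappa> x\<bar> * \<bar>f x\<bar> \<le> M * \<bar>f x\<bar>" using h by (intro mult_right_mono) auto
        also have "\<dots> \<le> \<bar>M\<bar> * \<bar>f x\<bar>" by (intro mult_right_mono) auto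
        also have "\<dots> = \<bar>M * f x\<bar>" by (simp add: abs_mult)
        finally show ?thesis using True by (simp add: abs_mult)
      qed simp
    qed
  qed
  then show ?thesis by (simp add: set_integrable_def)
qed

lemma L2ip_add_left:
  assumes "L2fun \<Omega> f" "L2fun \<Omega> g" "L2fun \<Omega> h"
  shows "L2ip \<Omega> (\<lambda>x. f x + g x) h = L2ip \<Omega> f h + L2ip \<Omega> g h"
proof -
  have "L2ip \<Omega> (\<lambda>x. f x + g x) h = (\<integral>x\<in>\<Omega>. f x * h x + g x * h x \<partial>lebesgue)"
    by (simp add: L2ip_def distrib_right)
  also have "\<dots> = L2ip \<Omega> f h + L2ip \<Omega> g h"
    unfolding L2ip_def by (rule set_integral_add(2)[OF L2_prod[OF assms(1,3)] L2_prod[OF assms(2,3)]])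
  finally show ?thesis .
qed

lemma L2ip_sym: "L2ip \<Omega> f g = L2ip \<Omega> g f"
  by (simp add: L2ip_def mult.commute)

lemma abil_sym: "abil \<Omega> \<kappa> f g = abil \<Omega> \<kappa> g f"
  by (simp add: abil_def inner_commute)

lemma m_sym: "m_ip \<Omega> \<kappa> \<tau> f g = m_ip \<Omega> \<kappa> \<tau> g f"
  by (simp add: m_ip_def L2ip_sym abil_sym)

lemma L2ip_sq_add:
  assumes "L2fun \<Omega> f" "L2fun \<Omega> g"
  shows "L2ip \<Omega> (\<lambda>x. f x + g x) (\<lambda>x. f x + g x) = L2ip \<Omega> f f + 2 * L2ip \<Omega> f g + L2ip \<Omega> g g"
proof -
  have i1: "set_integrable lebesgue \<Omega> (\<lambda>x. f x * f x)" "set_integrable lebesgue \<Omega> (\<lambda>x. f x * g x)"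
     "set_integrable lebesgue \<Omega> (\<lambda>x. g x * g x)"
    using L2_prod assms by blast+
  have "L2ip \<Omega> (\<lambda>x. f x + g x) (\<lambda>x. f x + g x) = (\<integral>x\<in>\<Omega>. (f x * f x + 2 * (f x * g x)) + g x * g x \<partial>lebesgue)"
    by (simp add: L2ip_def algebra_simps)
  also have "\<dots> = (\<integral>x\<in>\<Omega>. f x * f x + 2 * (f x * g x) \<partial>lebesgue) + (\<integral>x\<in>\<Omega>. g x * g x \<partial>lebesgue)"
    by (rule set_integral_add(2)) (use i1 in auto)
  also have "(\<integral>x\<in>\<Omega>. f x * f x + 2 * (f x * g x) \<partial>lebesgue) = (\<integral>x\<in>\<Omega>. f x * f x \<partial>lebesgue) + (\<integral>x\<in>\<Omega>. 2 * (f x * g x) \<partial>lebesgue)"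
    by (rule set_integral_add(2)) (use i1 in auto)
  finally show ?thesis by (simp add: L2ip_def)
qed

lemma L2ip_sq_diff:
  assumes "L2fun \<Omega> f" "L2fun \<Omega> g"
  shows "L2ip \<Omega> (\<lambda>x. f x - g x) (\<lambda>x. f x - g x) = L2ip \<Omega> f f - 2 * L2ip \<Omega> f g + L2ip \<Omega> g g"
proof -
  have i1: "set_integrable lebesgue \<Omega> (\<lambda>x. f x * f x)" "set_integrable lebesgue \<Omega> (\<lambda>x. f x * g x)"
     "set_integrable lebesgue \<Omega> (\<lambda>x. g x * g x)"
    using L2_prod assms by blast+
  have "L2ip \<Omega> (\<lambda>x. f x - g x) (\<lambda>x. f x - g x) = (\<integral>x\<in>\<Omega>. (f x * f x - 2 * (f x * g x)) + g x * g x \<partial>lebesgue)"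
    by (simp add: L2ip_def algebra_simps)
  also have "\<dots> = (\<integral>x\<in>\<Omega>. f x * f x - 2 * (f x * g x) \<partial>lebesgue) + (\<integral>x\<in>\<Omega>. g x * g x \<partial>lebesgue)"
    by (rule set_integral_add(2)) (use i1 in auto)
  also have "(\<integral>x\<in>\<Omega>. f x * f x - 2 * (f x * g x) \<partial>lebesgue) = (\<integral>x\<in>\<Omega>. f x * f x \<partial>lebesgue) - (\<integral>x\<in>\<Omega>. 2 * (f x * g x) \<partial>lebesgue)"
    by (rule set_integral_diff(2)) (use i1 in auto)
  finally show ?thesis by (simp add: L2ip_def)
qed

lemma H10_grads: "u \<in> H10 \<Omega> \<Longrightarrow> \<forall>i\<in>Basis. L2fun \<Omega> (\<lambda>x. wgrad \<Omega> u x \<bullet> i)"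
  using wgrad_H1 unfolding H1_with_grad_def by blast

lemma H10_L2: "u \<in> H10 \<Omega> \<Longrightarrow> L2fun \<Omega> u"
  using wgrad_H1 unfolding H1_with_grad_def by blast

lemma abil_diff:
  fixes \<kappa> :: "'a::euclidean_space \<Rightarrow> real"
  assumes Om: "open \<Omega>" "bounded \<Omega>"
    and km: "set_borel_measurable lebesgue \<Omega> \<kappa>" and kb: "AE x in lebesgue. x \<in> \<Omega> \<longrightarrow> \<bar>\<kappa> x\<bar> \<le> M"
    and p: "p \<in> H10 \<Omega>" and q: "q \<in> H10 \<Omega>" and w: "(\<lambda>x. p x - q x) \<in> H10 \<Omega>"
  shows "abil \<Omega> \<kappa> (\<lambda>x. p x - q x) (\<lambda>x. p x - q x) = abil \<Omega> \<kappa> p p - 2 * abil \<Omega> \<kappa> p q + abil \<Omega> \<kappa> q q"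
proof -
  define gp where "gp = wgrad \<Omega> p"
  define gq where "gq = wgrad \<Omega> q"
  define gw where "gw = wgrad \<Omega> (\<lambda>x. p x - q x)"
  have Hp: "\<forall>i\<in>Basis. L2fun \<Omega> (\<lambda>x. gp x \<bullet> i)" using H10_grads[OF p] by (simp add: gp_def)
  have Hq: "\<forall>i\<in>Basis. L2fun \<Omega> (\<lambda>x. gq x \<bullet> i)" using H10_grads[OF q] by (simp add: gq_def)
  have Hw: "\<forall>i\<in>Basis. L2fun \<Omega> (\<lambda>x. gw x \<bullet> i)" using H10_grads[OF w] by (simp add: gw_def)
  have Ipp: "set_integrable lebesgue \<Omega> (\<lambda>x. \<kappa> x * (gp x \<bullet> gp x))"
    by (rule kappa_int[OF km kb inner_int[OF Hp Hp]])
  have Ipq: "set_integrable lebesgue \<Omega> (\<lambda>x. \<kappa> x * (gp x \<bullet> gq x))"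
    by (rule kappa_int[OF km kb inner_int[OF Hp Hq]])
  have Iqq: "set_integrable lebesgue \<Omega> (\<lambda>x. \<kappa> x * (gq x \<bullet> gq x))"
    by (rule kappa_int[OF km kb inner_int[OF Hq Hq]])
  have Iww: "set_integrable lebesgue \<Omega> (\<lambda>x. \<kappa> x * (gw x \<bullet> gw x))"
    by (rule kappa_int[OF km kb inner_int[OF Hw Hw]])
  have I2: "set_integrable lebesgue \<Omega> (\<lambda>x. \<kappa> x * (gp x \<bullet> gp x) - 2 * (\<kappa> x * (gp x \<bullet> gq x)))"
    using Ipp Ipq by (intro set_integral_diff(1)) auto
  have I3: "set_integrable lebesgue \<Omega> (\<lambda>x. \<kappa> x * (gp x \<bullet> gp x) - 2 * (\<kappa> x * (gp x \<bullet> gq x)) + \<kappa> x * (gq x \<bullet> gq x))"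
    using I2 Iqq by (rule set_integral_add(1))
  have AE: "AE x in lebesgue. x \<in> \<Omega> \<longrightarrow> gw x = gp x - gq x"
    unfolding gw_def gp_def gq_def by (rule wgrad_diff_AE[OF Om p q w])
  have "abil \<Omega> \<kappa> (\<lambda>x. p x - q x) (\<lambda>x. p x - q x) = (\<integral>x\<in>\<Omega>. \<kappa> x * (gw x \<bullet> gw x) \<partial>lebesgue)"
    by (simp add: abil_def gw_def)
  also have "\<dots> = (\<integral>x\<in>\<Omega>. \<kappa> x * (gp x \<bullet> gp x) - 2 * (\<kappa> x * (gp x \<bullet> gq x)) + \<kappa> x * (gq x \<bullet> gq x) \<partial>lebesgue)"
    unfolding set_lebesgue_integral_def
  proof (rule integral_cong_AE)
    show "(\<lambda>x. indicator \<Omega> x *\<^sub>R (\<kappa> x * (gw x \<bullet> gw x))) \<in> borel_measurable lebesgue"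
      using Iww unfolding set_integrable_def by (rule borel_measurable_integrable)
    show "(\<lambda>x. indicator \<Omega> x *\<^sub>R (\<kappa> x * (gp x \<bullet> gp x) - 2 * (\<kappa> x * (gp x \<bullet> gq x)) + \<kappa> x * (gq x \<bullet> gq x))) \<in> borel_measurable lebesgue"
      using I3 unfolding set_integrable_def by (rule borel_measurable_integrable)
    show "AE x in lebesgue. indicator \<Omega> x *\<^sub>R (\<kappa> x * (gw x \<bullet> gw x)) =
        indicator \<Omega> x *\<^sub>R (\<kappa> x * (gp x \<bullet> gp x) - 2 * (\<kappa> x * (gp x \<bullet> gq x)) + \<kappa> x * (gq x \<bullet> gq x))"
      using AE
    proof (rule eventually_mono)
      fix x assume h: "x \<in> \<Omega> \<longrightarrow> gw x = gp x - gq x"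
      show "indicator \<Omega> x *\<^sub>R (\<kappa> x * (gw x \<bullet> gw x)) =
        indicator \<Omega> x *\<^sub>R (\<kappa> x * (gp x \<bullet> gp x) - 2 * (\<kappa> x * (gp x \<bullet> gq x)) + \<kappa> x * (gq x \<bullet> gq x))"
      proof (cases "x \<in> \<Omega>")
        case True
        then have "gw x = gp x - gq x" using h by simp
        then have e: "gw x \<bullet> gw x = gp x \<bullet> gp x - 2 * (gp x \<bullet> gq x) + gq x \<bullet> gq x"
          by (simp add: inner_diff_left inner_diff_right inner_commute)
        have "\<kappa> x * (gw x \<bullet> gw x) = \<kappa> x * (gp x \<bullet> gp x) - 2 * (\<kappa> x * (gp x \<bullet> gq x)) + \<kappa> x * (gq x \<bullet> gq x)"
          by (subst e) (simp add: algebra_simps)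
        then show ?thesis using True by simp
      qed simp
    qed
  qed
  also have "\<dots> = (\<integral>x\<in>\<Omega>. \<kappa> x * (gp x \<bullet> gp x) - 2 * (\<kappa> x * (gp x \<bullet> gq x)) \<partial>lebesgue) + (\<integral>x\<in>\<Omega>. \<kappa> x * (gq x \<bullet> gq x) \<partial>lebesgue)"
    by (rule set_integral_add(2)[OF I2 Iqq])
  also have "(\<integral>x\<in>\<Omega>. \<kappa> x * (gp x \<bullet> gp x) - 2 * (\<kappa> x * (gp x \<bullet> gq x)) \<partial>lebesgue)
      = (\<integral>x\<in>\<Omega>. \<kappa> x * (gp x \<bullet> gp x) \<partial>lebesgue) - (\<integral>x\<in>\<Omega>. 2 * (\<kappa> x * (gp x \<bullet> gq x)) \<partial>lebesgue)"
    by (rule set_integral_diff(2)) (use Ipp Ipq in auto)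
  finally show ?thesis by (simp add: abil_def gp_def gq_def)
qed

theorem mainTheorem3:
  fixes \<Omega> :: "'a::euclidean_space set"
    and \<kappa> :: "'a \<Rightarrow> real" and \<kappa>0 \<tau> :: real
    and V1 V2 :: "('a \<Rightarrow> real) set"
    and b c d :: "('a \<Rightarrow> real) \<Rightarrow> ('a \<Rightarrow> real)"
  assumes dom: "open \<Omega>" "connected \<Omega>" "bounded \<Omega>" "\<Omega> \<noteq> {}"
    and kappa_meas: "set_borel_measurable lebesgue \<Omega> \<kappa>"
    and kappa_bdd: "\<exists>M. AE x in lebesgue. x \<in> \<Omega> \<longrightarrow> \<bar>\<kappa> x\<bar> \<le> M"
    and kappa0: "\<kappa>0 > 0" "AE x in lebesgue. x \<in> \<Omega> \<longrightarrow> \<kappa> x \<ge> \<kappa>0"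
    and V1: "fun_subspace V1" "fin_dim_fun V1" "V1 \<subseteq> H10 \<Omega>"
    and V2: "fun_subspace V2" "fin_dim_fun V2" "V2 \<subseteq> H10 \<Omega>"
    and orth: "\<forall>v1\<in>V1. \<forall>v2\<in>V2. L2ip \<Omega> v1 v2 = 0"
    and tau: "\<tau> > 0"
    and b_def: "\<forall>v1\<in>V1. b v1 \<in> V1 \<and> (\<forall>v\<in>V1. m_ip \<Omega> \<kappa> \<tau> (b v1) v = L2ip \<Omega> v1 v)"
    and c_def: "\<forall>u\<in>sum_space V1 V2. c u \<in> V1 \<and>
                  (\<forall>v\<in>V1. m_ip \<Omega> \<kappa> \<tau> (c u) v = \<tau>^2 / 2 * abil \<Omega> \<kappa> u v)"
    and d_def: "\<forall>u\<in>sum_space V1 V2. d u \<in> V1 \<and>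
                  (\<forall>v\<in>V1. abil \<Omega> \<kappa> (d u) v = abil \<Omega> \<kappa> u v)"
    and u1: "u1 \<in> V1" and u2: "u2 \<in> V2"
  shows "L2ip \<Omega> u1 u1 + \<tau>^2 / 2 * abil \<Omega> \<kappa> u2 u2
           - m_ip \<Omega> \<kappa> \<tau> (\<lambda>x. b u1 x - c u2 x) (\<lambda>x. b u1 x - c u2 x)
         = s_ip \<Omega> \<kappa> \<tau> b (\<lambda>x. u1 x + d u2 x) (\<lambda>x. u1 x + d u2 x)
           + n_sq \<Omega> \<kappa> \<tau> b c d u2"
proof -
  obtain M where kb: "AE x in lebesgue. x \<in> \<Omega> \<longrightarrow> \<bar>\<kappa> x\<bar> \<le> M" using kappa_bdd by blast
  have Om: "open \<Omega>" "bounded \<Omega>" using dom by auto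
  have V1z: "(\<lambda>x. 0) \<in> V1" and V1a: "\<And>u v. u \<in> V1 \<Longrightarrow> v \<in> V1 \<Longrightarrow> (\<lambda>x. u x + v x) \<in> V1"
    and V1m: "\<And>c u. u \<in> V1 \<Longrightarrow> (\<lambda>x. c * u x) \<in> V1"
    using V1(1) unfolding fun_subspace_def by blast+
  have V1s: "\<And>u v. u \<in> V1 \<Longrightarrow> v \<in> V1 \<Longrightarrow> (\<lambda>x. u x - v x) \<in> V1"
  proof -
    fix u v assume "u \<in> V1" "v \<in> V1"
    then have "(\<lambda>x. u x + (\<lambda>x. (-1) * v x) x) \<in> V1" using V1a V1m by blast
    then show "(\<lambda>x. u x - v x) \<in> V1" by simp
  qed
  have L2: "\<And>v. v \<in> V1 \<Longrightarrow> L2fun \<Omega> v" using V1(3) H10_L2 by blast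
  have u2s: "u2 \<in> sum_space V1 V2"
  proof -
    have "(\<lambda>x. (\<lambda>x. 0) x + u2 x) \<in> sum_space V1 V2" unfolding sum_space_def
      by (rule CollectI, rule exI[of _ "\<lambda>x. 0"], rule exI[of _ u2]) (simp add: V1z u2)
    then show ?thesis by simp
  qed
  define T where "T = \<tau>^2 / 2"
  define bu1 where "bu1 = b u1"
  define cu2 where "cu2 = c u2"
  define du2 where "du2 = d u2"
  define z where "z = (\<lambda>x. u1 x + du2 x)"
  define w where "w = (\<lambda>x. bu1 x - cu2 x)"
  define bz where "bz = b z"
  define bd where "bd = b du2"
  have cu2V: "cu2 \<in> V1" and C: "\<And>v. v \<in> V1 \<Longrightarrow> m_ip \<Omega> \<kappa> \<tau> cu2 v = T * abil \<Omega> \<kappa> u2 v"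
    using c_def u2s unfolding cu2_def T_def by blast+
  have du2V: "du2 \<in> V1" and D: "\<And>v. v \<in> V1 \<Longrightarrow> abil \<Omega> \<kappa> du2 v = abil \<Omega> \<kappa> u2 v"
    using d_def u2s unfolding du2_def by blast+
  have bu1V: "bu1 \<in> V1" and B1: "\<And>v. v \<in> V1 \<Longrightarrow> m_ip \<Omega> \<kappa> \<tau> bu1 v = L2ip \<Omega> u1 v"
    using b_def u1 unfolding bu1_def by blast+
  have zV: "z \<in> V1" unfolding z_def using V1a u1 du2V by blast
  have wV: "w \<in> V1" unfolding w_def using V1s bu1V cu2V by blast
  have bzV: "bz \<in> V1" and Bz: "\<And>v. v \<in> V1 \<Longrightarrow> m_ip \<Omega> \<kappa> \<tau> bz v = L2ip \<Omega> z v"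
    using b_def zV unfolding bz_def by blast+
  have bdV: "bd \<in> V1" and Bd: "\<And>v. v \<in> V1 \<Longrightarrow> m_ip \<Omega> \<kappa> \<tau> bd v = L2ip \<Omega> du2 v"
    using b_def du2V unfolding bd_def by blast+
  have mdef: "\<And>f g. m_ip \<Omega> \<kappa> \<tau> f g = L2ip \<Omega> f g + T * abil \<Omega> \<kappa> f g"
    by (simp add: m_ip_def T_def)
  have E1: "m_ip \<Omega> \<kappa> \<tau> w w = m_ip \<Omega> \<kappa> \<tau> bu1 bu1 - 2 * m_ip \<Omega> \<kappa> \<tau> bu1 cu2 + m_ip \<Omega> \<kappa> \<tau> cu2 cu2"
  proof -
    have l: "L2ip \<Omega> w w = L2ip \<Omega> bu1 bu1 - 2 * L2ip \<Omega> bu1 cu2 + L2ip \<Omega> cu2 cu2"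
      unfolding w_def by (rule L2ip_sq_diff[OF L2[OF bu1V] L2[OF cu2V]])
    have a: "abil \<Omega> \<kappa> w w = abil \<Omega> \<kappa> bu1 bu1 - 2 * abil \<Omega> \<kappa> bu1 cu2 + abil \<Omega> \<kappa> cu2 cu2"
      unfolding w_def
      by (rule abil_diff[OF Om kappa_meas kb]) (use bu1V cu2V wV V1(3) w_def in auto)
    show ?thesis unfolding mdef l a by (simp add: algebra_simps)
  qed
  have E2: "L2ip \<Omega> z z = L2ip \<Omega> u1 u1 + 2 * L2ip \<Omega> u1 du2 + L2ip \<Omega> du2 du2"
    unfolding z_def by (rule L2ip_sq_add[OF L2[OF u1] L2[OF du2V]])
  have E3: "\<And>v. v \<in> V1 \<Longrightarrow> L2ip \<Omega> z v = L2ip \<Omega> u1 v + L2ip \<Omega> du2 v"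
    unfolding z_def using L2ip_add_left L2 u1 du2V by blast
  have f1: "m_ip \<Omega> \<kappa> \<tau> bz bz = L2ip \<Omega> z bz" using Bz bzV by blast
  have f2: "L2ip \<Omega> z bz = L2ip \<Omega> u1 bz + L2ip \<Omega> du2 bz" using E3 bzV by blast
  have f3: "L2ip \<Omega> u1 bz = L2ip \<Omega> u1 bu1 + L2ip \<Omega> du2 bu1"
  proof -
    have "L2ip \<Omega> u1 bz = m_ip \<Omega> \<kappa> \<tau> bu1 bz" using B1 bzV by simp
    also have "\<dots> = m_ip \<Omega> \<kappa> \<tau> bz bu1" by (rule m_sym)
    also have "\<dots> = L2ip \<Omega> z bu1" using Bz bu1V by simp
    also have "\<dots> = L2ip \<Omega> u1 bu1 + L2ip \<Omega> du2 bu1" using E3 bu1V by simp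
    finally show ?thesis .
  qed
  have f4: "L2ip \<Omega> du2 bz = L2ip \<Omega> u1 bd + L2ip \<Omega> du2 bd"
  proof -
    have "L2ip \<Omega> du2 bz = m_ip \<Omega> \<kappa> \<tau> bd bz" using Bd bzV by simp
    also have "\<dots> = m_ip \<Omega> \<kappa> \<tau> bz bd" by (rule m_sym)
    also have "\<dots> = L2ip \<Omega> z bd" using Bz bdV by simp
    also have "\<dots> = L2ip \<Omega> u1 bd + L2ip \<Omega> du2 bd" using E3 bdV by simp
    finally show ?thesis .
  qed
  have f5: "L2ip \<Omega> u1 bd = L2ip \<Omega> du2 bu1"
  proof -
    have "L2ip \<Omega> u1 bd = m_ip \<Omega> \<kappa> \<tau> bu1 bd" using B1 bdV by simp
    also have "\<dots> = m_ip \<Omega> \<kappa> \<tau> bd bu1" by (rule m_sym)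
    also have "\<dots> = L2ip \<Omega> du2 bu1" using Bd bu1V by simp
    finally show ?thesis .
  qed
  have f6: "m_ip \<Omega> \<kappa> \<tau> bu1 bu1 = L2ip \<Omega> u1 bu1" using B1 bu1V by blast
  have f7: "m_ip \<Omega> \<kappa> \<tau> bd bd = L2ip \<Omega> du2 bd" using Bd bdV by blast
  have f8: "m_ip \<Omega> \<kappa> \<tau> bu1 cu2 = T * abil \<Omega> \<kappa> du2 bu1"
  proof -
    have "m_ip \<Omega> \<kappa> \<tau> bu1 cu2 = m_ip \<Omega> \<kappa> \<tau> cu2 bu1" by (rule m_sym)
    also have "\<dots> = T * abil \<Omega> \<kappa> u2 bu1" using C bu1V by simp
    also have "\<dots> = T * abil \<Omega> \<kappa> du2 bu1" using D bu1V by simp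
    finally show ?thesis .
  qed
  have f9: "L2ip \<Omega> u1 du2 = L2ip \<Omega> du2 bu1 + T * abil \<Omega> \<kappa> du2 bu1"
  proof -
    have "L2ip \<Omega> u1 du2 = m_ip \<Omega> \<kappa> \<tau> bu1 du2" using B1 du2V by simp
    also have "\<dots> = L2ip \<Omega> bu1 du2 + T * abil \<Omega> \<kappa> bu1 du2" by (rule mdef)
    also have "\<dots> = L2ip \<Omega> du2 bu1 + T * abil \<Omega> \<kappa> du2 bu1" by (simp add: L2ip_sym abil_sym)
    finally show ?thesis .
  qed
  have goal: "L2ip \<Omega> u1 u1 + T * abil \<Omega> \<kappa> u2 u2 - m_ip \<Omega> \<kappa> \<tau> w w
      = (L2ip \<Omega> z z - m_ip \<Omega> \<kappa> \<tau> bz bz)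
        + (T * abil \<Omega> \<kappa> u2 u2 - m_ip \<Omega> \<kappa> \<tau> cu2 cu2 - (L2ip \<Omega> du2 du2 - m_ip \<Omega> \<kappa> \<tau> bd bd))"
    using E1 E2 f1 f2 f3 f4 f5 f6 f7 f8 f9 by linarith
  show ?thesis
    using goal unfolding s_ip_def n_sq_def T_def bu1_def cu2_def du2_def z_def w_def bz_def bd_def .
qed

end
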